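(* Let $\lambda>0$ and $S\in(0,\lambda]$ be a given spot price. For a company $j$ with parameters $\pi^0_j,\pi^1_j,\gamma_j>0$, $\mathrm{E}^{\mathrm{bau}}_j=\pi^0_j/\pi^1_j$, $\varrho_j=1/\pi^1_j+1/\gamma_j$ and $\lambda\varrho_j<\mathrm{E}^{\mathrm{bau}}_j$: (1) If company $c$ purchases certificates directly at the auction, its optimal demand is $\bm{\delta_c}(\bm{P_c}(S))=\bm{\delta_c}(S)=\mathrm{E}^{\mathrm{bau}}_c-S\varrho_c$. (2) If company $b$ purchases certificates through a financial intermediary, the intermediated price is $\bm{P_b}(S)=\tfrac12\big(S+\mathrm{E}^{\mathrm{bau}}_b/\varrho_b\big)\wedge\lambda$ and the resulting demand is $\bm{\delta_b}(\bm{P_b}(S))=\tfrac12(\mathrm{E}^{\mathrm{bau}}_b-S\varrho_b)\vee(\mathrm{E}^{\mathrm{bau}}_b-\lambda\varrho_b)$.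
   Context: Company $j$ facing certificate price $P$ maximizes $\pi^0_jq-\tfrac{\pi^1_j}2q^2-\tfrac{\gamma_j}2[(1-e^{-a})q]^2-\delta P-\lambda(e^{-a}q-\delta)^+$ over $(q,a,\delta)$; its optimal demand is $\bm{\delta_j}(P)=\mathrm{E}^{\mathrm{bau}}_j-P\varrho_j$. A company buying directly faces $\bm{P_c}(S)=S$. An intermediary buying at spot price $S$ sets the price $\bm{P_b}(S)$ maximizing its wealth $\bm{\delta_b}(P)(P-S)$ over the admissible interval $P\in[S,\lambda]$. $x\wedge y=\min(x,y)$, $x\vee y=\max(x,y)$. *)

theory Defs
  imports Complex_Main
begin

text \<open>Company parameters: p0 = pi^0_j, p1 = pi^1_j, g = gamma_j; lam = penalty lambda.\<close>

definition Ebau :: "real \<Rightarrow> real \<Rightarrow> real" where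
  "Ebau p0 p1 = p0 / p1"

definition rho :: "real \<Rightarrow> real \<Rightarrow> real" where
  "rho p1 g = 1 / p1 + 1 / g"

text \<open>The company's objective (wealth) at certificate price P, for production q,
  abatement effort a and certificate purchase d.\<close>
definition profit :: "real \<Rightarrow> real \<Rightarrow> real \<Rightarrow> real \<Rightarrow> real \<Rightarrow> real \<Rightarrow> real \<Rightarrow> real \<Rightarrow> real" where
  "profit p0 p1 g lam P q a d =
     p0 * q - p1 / 2 * q\<^sup>2 - g / 2 * ((1 - exp (- a)) * q)\<^sup>2 - d * P
     - lam * max (exp (- a) * q - d) 0"

definition is_optimal_demand :: "real \<Rightarrow> real \<Rightarrow> real \<Rightarrow> real \<Rightarrow> real \<Rightarrow> real \<Rightarrow> bool" where
  "is_optimal_demand p0 p1 g lam P d \<longleftrightarrow>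
     (\<exists>q a. q \<ge> 0 \<and> a \<ge> 0 \<and>
        (\<forall>q' a' d'. q' \<ge> 0 \<longrightarrow> a' \<ge> 0 \<longrightarrow>
           profit p0 p1 g lam P q' a' d' \<le> profit p0 p1 g lam P q a d))"

definition demand :: "real \<Rightarrow> real \<Rightarrow> real \<Rightarrow> real \<Rightarrow> real" where
  "demand p0 p1 g P = Ebau p0 p1 - P * rho p1 g"

definition Pc :: "real \<Rightarrow> real" where
  "Pc S = S"

definition is_intermediary_price :: "real \<Rightarrow> real \<Rightarrow> real \<Rightarrow> real \<Rightarrow> real \<Rightarrow> real \<Rightarrow> bool" where
  "is_intermediary_price p0 p1 g lam S P \<longleftrightarrow>
     P \<in> {S..lam} \<and>
     (\<forall>P'\<in>{S..lam}. demand p0 p1 g P' * (P' - S) \<le> demand p0 p1 g P * (P - S))"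

end

theory Submission
  imports Defs
begin

lemma rho_pos: "p1 > 0 \<Longrightarrow> g > 0 \<Longrightarrow> rho p1 g > 0"
  unfolding rho_def by (simp add: add_pos_pos)

lemma opt_demand:
  fixes p0 p1 g lam P :: real
  assumes p0: "p0 > 0" and p1: "p1 > 0" and g: "g > 0" and P0: "0 \<le> P" and Pl: "P \<le> lam"
    and cond: "P * rho p1 g < Ebau p0 p1"
  shows "is_optimal_demand p0 p1 g lam P (demand p0 p1 g P)"
proof -
  define y where "y = demand p0 p1 g P"
  define x where "x = P / g"
  define q where "q = (p0 - P) / p1"
  have y_pos: "y > 0" using cond unfolding y_def demand_def by simp
  have x_nn: "x \<ge> 0" using P0 g unfolding x_def by simp
  have qxy: "q = x + y"
    unfolding q_def x_def y_def demand_def Ebau_def rho_def using p1 g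
    by (simp add: field_simps)
  have q_pos: "q > 0" using qxy y_pos x_nn by simp
  define a where "a = ln (q / y)"
  have a_nn: "a \<ge> 0" unfolding a_def using qxy y_pos x_nn q_pos by simp
  have ea: "exp (- a) = y / q" unfolding a_def using q_pos y_pos
    by (simp add: ln_div exp_diff)
  have e1: "exp (- a) * q = y" using ea q_pos by simp
  have e2: "(1 - exp (- a)) * q = x" using e1 qxy by (simp add: algebra_simps)
  have pq: "p1 * q = p0 - P" unfolding q_def using p1 by simp
  have gx: "g * x = P" unfolding x_def using g by simp
  have val: "profit p0 p1 g lam P q a y = (p0 - P) * q - p1 / 2 * q\<^sup>2 - g / 2 * x\<^sup>2 + P * x"
    unfolding profit_def e1 e2 using qxy by (simp add: algebra_simps)
  show ?thesis
    unfolding is_optimal_demand_def y_def[symmetric]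
  proof (intro exI conjI allI impI)
    show "q \<ge> 0" using q_pos by simp
    show "a \<ge> 0" by (rule a_nn)
    fix q' a' d' :: real
    assume q': "q' \<ge> 0" and a': "a' \<ge> 0"
    define y' where "y' = exp (- a') * q'"
    define x' where "x' = (1 - exp (- a')) * q'"
    have q'xy: "q' = x' + y'" unfolding x'_def y'_def by (simp add: algebra_simps)
    have pen: "- d' * P - lam * max (y' - d') 0 \<le> - P * y'"
    proof (cases "d' \<ge> y'")
      case True
      then have "P * y' \<le> P * d'" using P0 by (simp add: mult_left_mono)
      moreover have "max (y' - d') 0 = 0" using True by simp
      ultimately show ?thesis by (simp add: mult.commute)
    next
      case False
      then have "lam * (y' - d') \<ge> P * (y' - d')" using Pl by (simp add: mult_right_mono)
      then show ?thesis using False by (simp add: algebra_simps)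
    qed
    have "profit p0 p1 g lam P q' a' d' \<le> p0 * q' - p1 / 2 * q'\<^sup>2 - g / 2 * x'\<^sup>2 - P * y'"
      unfolding profit_def x'_def[symmetric] y'_def[symmetric] using pen by simp
    also have "\<dots> = (p0 - P) * q' - p1 / 2 * q'\<^sup>2 - g / 2 * x'\<^sup>2 + P * x'"
      using q'xy by (simp add: algebra_simps)
    also have "\<dots> \<le> (p0 - P) * q - p1 / 2 * q\<^sup>2 - g / 2 * x\<^sup>2 + P * x"
    proof -
      have i1: "(p0 - P) * q - p1 / 2 * q\<^sup>2 - ((p0 - P) * q' - p1 / 2 * q'\<^sup>2) = p1 / 2 * (q' - q)\<^sup>2"
        unfolding pq[symmetric] by (simp add: power2_eq_square algebra_simps)
      have i2: "P * x - g / 2 * x\<^sup>2 - (P * x' - g / 2 * x'\<^sup>2) = g / 2 * (x' - x)\<^sup>2"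
        unfolding gx[symmetric] by (simp add: power2_eq_square algebra_simps)
      have "p1 / 2 * (q' - q)\<^sup>2 \<ge> 0" "g / 2 * (x' - x)\<^sup>2 \<ge> 0" using p1 g by simp_all
      then show ?thesis using i1 i2 by linarith
    qed
    also have "\<dots> = profit p0 p1 g lam P q a y" using val by simp
    finally show "profit p0 p1 g lam P q' a' d' \<le> profit p0 p1 g lam P q a y" .
  qed
qed

lemma quad_id:
  fixes E r S P :: real
  assumes "r > 0"
  shows "(E - P * r) * (P - S) = r * (((S + E / r) / 2 - S)\<^sup>2 - (P - (S + E / r) / 2)\<^sup>2)"
  using assms by (simp add: power2_eq_square field_simps)

theorem propositionA1:
  fixes lam S p0c p1c gc p0b p1b gb :: real
  assumes "lam > 0" and "0 < S" and "S \<le> lam"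
    and "p0c > 0" and "p1c > 0" and "gc > 0"
    and "lam * rho p1c gc < Ebau p0c p1c"
    and "p0b > 0" and "p1b > 0" and "gb > 0"
    and "lam * rho p1b gb < Ebau p0b p1b"
  shows "is_optimal_demand p0c p1c gc lam (Pc S) (demand p0c p1c gc (Pc S))
       \<and> demand p0c p1c gc (Pc S) = demand p0c p1c gc S
       \<and> demand p0c p1c gc S = Ebau p0c p1c - S * rho p1c gc
       \<and> {P. is_intermediary_price p0b p1b gb lam S P}
           = {min ((S + Ebau p0b p1b / rho p1b gb) / 2) lam}
       \<and> is_optimal_demand p0b p1b gb lam (min ((S + Ebau p0b p1b / rho p1b gb) / 2) lam)
           (demand p0b p1b gb (min ((S + Ebau p0b p1b / rho p1b gb) / 2) lam))
       \<and> demand p0b p1b gb (min ((S + Ebau p0b p1b / rho p1b gb) / 2) lam)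
           = max ((Ebau p0b p1b - S * rho p1b gb) / 2) (Ebau p0b p1b - lam * rho p1b gb)"
proof -
  have rc: "rho p1c gc > 0" using assms rho_pos by simp
  have rb: "rho p1b gb > 0" using assms rho_pos by simp
  have c1: "is_optimal_demand p0c p1c gc lam (Pc S) (demand p0c p1c gc (Pc S))"
  proof -
    have "S * rho p1c gc \<le> lam * rho p1c gc" using rc assms by (simp add: mult_right_mono)
    then show ?thesis unfolding Pc_def using assms by (intro opt_demand) auto
  qed
  define E where "E = Ebau p0b p1b"
  define r where "r = rho p1b gb"
  define v where "v = (S + E / r) / 2"
  define m where "m = min v lam"
  have Er: "E / r > lam" using assms(11) rb unfolding E_def r_def by (simp add: field_simps)
  have vS: "v > S" unfolding v_def using Er assms by simp
  have mS: "m \<ge> S" "m \<le> lam" unfolding m_def using vS assms by auto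
  have dem: "\<And>P. demand p0b p1b gb P = E - P * r" unfolding demand_def E_def r_def by simp
  have qi: "\<And>P. demand p0b p1b gb P * (P - S) = r * ((v - S)\<^sup>2 - (P - v)\<^sup>2)"
    unfolding dem v_def using quad_id[OF rb[folded r_def]] by simp
  have sq: "\<And>P. P \<in> {S..lam} \<Longrightarrow> (P - v)\<^sup>2 \<ge> (m - v)\<^sup>2 \<and> ((P - v)\<^sup>2 = (m - v)\<^sup>2 \<longrightarrow> P = m)"
  proof -
    fix P assume P: "P \<in> {S..lam}"
    show "(P - v)\<^sup>2 \<ge> (m - v)\<^sup>2 \<and> ((P - v)\<^sup>2 = (m - v)\<^sup>2 \<longrightarrow> P = m)"
    proof (cases "v \<le> lam")
      case True
      then have "m = v" unfolding m_def by simp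
      then show ?thesis by simp
    next
      case False
      then have mm: "m = lam" unfolding m_def by simp
      have "v - P \<ge> v - lam" "v - lam > 0" using P False by auto
      then have "(v - P)\<^sup>2 \<ge> (v - lam)\<^sup>2" by (simp add: power_mono)
      moreover have "(v - P)\<^sup>2 = (v - lam)\<^sup>2 \<longrightarrow> P = lam"
        using \<open>v - P \<ge> v - lam\<close> \<open>v - lam > 0\<close> by (simp add: power2_eq_iff)
      ultimately show ?thesis unfolding mm by (simp add: power2_commute)
    qed
  qed
  have c4: "{P. is_intermediary_price p0b p1b gb lam S P} = {m}"
  proof (intro set_eqI iffI)
    fix P assume "P \<in> {P. is_intermediary_price p0b p1b gb lam S P}"
    then have P: "P \<in> {S..lam}" and le: "demand p0b p1b gb m * (m - S) \<le> demand p0b p1b gb P * (P - S)"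
      using mS unfolding is_intermediary_price_def by auto
    have "(P - v)\<^sup>2 \<le> (m - v)\<^sup>2" using le rb[folded r_def] unfolding qi by simp
    then show "P \<in> {m}" using sq[OF P] by simp
  next
    fix P assume "P \<in> {m}"
    then have Pm: "P = m" by simp
    show "P \<in> {P. is_intermediary_price p0b p1b gb lam S P}"
      unfolding is_intermediary_price_def Pm
    proof (intro CollectI conjI ballI)
      show "m \<in> {S..lam}" using mS by simp
      fix P' assume P': "P' \<in> {S..lam}"
      show "demand p0b p1b gb P' * (P' - S) \<le> demand p0b p1b gb m * (m - S)"
        unfolding qi using sq[OF P'] rb[folded r_def] by (simp add: mult_left_mono)
    qed
  qed
  have c5: "is_optimal_demand p0b p1b gb lam m (demand p0b p1b gb m)"
  proof -
    have "m * r \<le> lam * r" using mS rb[folded r_def] by (simp add: mult_right_mono)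
    then show ?thesis using assms mS unfolding E_def r_def by (intro opt_demand) auto
  qed
  have c6: "demand p0b p1b gb m = max ((E - S * r) / 2) (E - lam * r)"
  proof -
    have dv: "E - v * r = (E - S * r) / 2" unfolding v_def using rb[folded r_def]
      by (simp add: field_simps)
    show ?thesis
    proof (cases "v \<le> lam")
      case True
      then have "v * r \<le> lam * r" using rb[folded r_def] by (simp add: mult_right_mono)
      then show ?thesis using True dv unfolding m_def dem by simp
    next
      case False
      then have "v * r \<ge> lam * r" using rb[folded r_def] by (simp add: mult_right_mono)
      then show ?thesis using False dv unfolding m_def dem by simp
    qed
  qed
  show ?thesis using c1 c4 c5 c6 unfolding m_def v_def E_def r_def Pc_def demand_def by simp
qed

end
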